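(* Let $S=\{1,\ldots,n\}$, $\boldsymbol{P}(S)$ the set of partitions of $S$, and $\varrho(\mathcal{B})\ge0$ for $\mathcal{B}\in\boldsymbol{P}(S)$. Consider curves $a_t=\sum_{\mathcal{A}\in\boldsymbol{P}(S)}a_t(\mathcal{A})\,\mathcal{A}\in\mathbb{R}^{\boldsymbol{P}(S)}$ with initial value $a_0(\underline{1})=1$ and $a_0(\mathcal{A})=0$ for $\mathcal{A}\ne\underline 1$, where $\underline 1=\{S\}$. Then $a_t$ solves the system \[ \dot{a}_t = -\sum_{\mathcal{A}} \sum_{\mathcal{B}} \varrho(\mathcal{B})\, a_t(\mathcal{A})\, \mathcal{A} + \sum_{\mathcal{A}} \sum_{\mathcal{B} \succcurlyeq \mathcal{A}} \Bigg ( \prod_{i=1}^{|\mathcal{B}|}\sum_{\substack{\mathcal{C} \in \boldsymbol{P}(S) \\ \mathcal{C}|_{B_i} = \mathcal{A}|_{B_i}}} a_t(\mathcal{C}) \Bigg) \varrho (\mathcal{B})\, \mathcal{A} \] if and only if it solves the law of mass action of the chemical reaction network on species set $\boldsymbol{P}(S)$ consisting of the reactions \[ \sum_{j=1}^{|\mathcal{C}|}\mathcal{A}_j\xrightarrow{\ \varrho(\mathcal{C})/|\mathcal{C}|\ }\sum_{j=1}^{|\mathcal{C}|}\bigcup_{i=1}^{|\mathcal{C}|}\mathcal{A}_{i+j-1}|_{C_i}, \] one for every $\mathcal{C}=\{C_1,\ldots,C_{|\mathcal{C}|}\}\in\boldsymbol{P}(S)$ and every tuple $(\mathcal{A}_1,\ldots,\mathcal{A}_{|\mathcal{C}|})\in\boldsymbol{P}(S)^{|\mathcal{C}|}$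 (indices mod $|\mathcal{C}|$), namely \[ \dot{a}_t = \sum_{\mathcal{C}} \sum_{\mathcal{A}_1,\ldots,\mathcal{A}_{|\mathcal{C}|}} \frac{\varrho(\mathcal{C})}{|\mathcal{C}|}\, a_t (\mathcal{A}_1) \cdots a_t(\mathcal{A}_{|\mathcal{C}|}) \sum_{j = 1}^{|\mathcal{C}|} \Big ( \bigcup_{i=1}^{|\mathcal{C}|} \mathcal{A}_{i + j - 1}|_{C_i}- \mathcal{A}_j \Big ), \] all sums running over $\boldsymbol{P}(S)$.
   Context: A partition of $S$ is a set of pairwise disjoint nonempty blocks with union $S$; blocks of $\mathcal{B}$ are enumerated $B_1,\ldots,B_{|\mathcal{B}|}$ so that $B_1\ni1$ and $B_k$ contains the smallest element not in $B_1\cup\cdots\cup B_{k-1}$. $\mathcal{A}\preccurlyeq\mathcal{B}$ (equivalently $\mathcal{B}\succcurlyeq\mathcal{A}$) means every block of $\mathcal{A}$ is contained in a block of $\mathcal{B}$. For $U\subseteq S$, $\mathcal{A}|_U=\{A\cap U:A\in\mathcal{A}\}\setminus\{\varnothing\}$; a union $\bigcup_i\mathcal{A}_{i+j-1}|_{C_i}$ of partitions of the disjoint blocks $C_i$ is a partition of $S$. Vectors in $\mathbb{R}^{\boldsymbol{P}(S)}$ are formal sums with each partition identified with a standard basis vector. The law of mass action of a network of reactions $r_1+\cdots+r_m\xrightarrow{\kappa}s_1+\cdots+s_m$ is $\dot c_t=\sum\kappa\,c_t(r_1)\cdots c_t(r_m)(s_1+\cdots+s_m-r_1-\cdots-r_m)$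 summed over all reactions. *)

theory Defs
  imports "HOL-Analysis.Analysis" "HOL-Library.Disjoint_Sets"
begin

definition ground :: "nat \<Rightarrow> nat set" where
  "ground n = {1..n}"

definition parts :: "nat \<Rightarrow> nat set set set" where
  "parts n = {P. partition_on (ground n) P}"

definition one_part :: "nat \<Rightarrow> nat set set" where
  "one_part n = {ground n}"

definition coarser :: "nat set set \<Rightarrow> nat set set \<Rightarrow> bool" where
  "coarser A B \<longleftrightarrow> (\<forall>X\<in>A. \<exists>Y\<in>B. X \<subseteq> Y)"

definition restr :: "nat set set \<Rightarrow> nat set \<Rightarrow> nat set set" where
  "restr A U = (\<lambda>X. X \<inter> U) ` A - {{}}"

text \<open>Blocks enumerated B_1, B_2, ... (0-indexed here) by increasing minimum element,
  i.e. B_1 contains the least element and B_k contains the least element not in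
  B_1 \<union> ... \<union> B_{k-1}.\<close>
definition blocks :: "nat set set \<Rightarrow> nat set list" where
  "blocks B = map (\<lambda>m. THE X. X \<in> B \<and> Min X = m) (sorted_list_of_set (Min ` B))"

definition rhs1 :: "nat \<Rightarrow> (nat set set \<Rightarrow> real) \<Rightarrow> (nat set set \<Rightarrow> real) \<Rightarrow> nat set set \<Rightarrow> real" where
  "rhs1 n \<rho> a A =
     - (\<Sum>B\<in>parts n. \<rho> B) * a A
     + (\<Sum>B\<in>{B\<in>parts n. coarser A B}.
          (\<Prod>Bi\<in>B. \<Sum>C\<in>{C\<in>parts n. restr C Bi = restr A Bi}. a C) * \<rho> B)"

definition tuples :: "nat \<Rightarrow> nat \<Rightarrow> nat set set list set" where
  "tuples n k = {xs. length xs = k \<and> set xs \<subseteq> parts n}"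

text \<open>Product partition of reaction for C, tuple xs and shift j (0-indexed):
  the union over i of A_{i+j-1}|_{C_i}, indices mod |C|.\<close>
definition product_part :: "nat set set \<Rightarrow> nat set set list \<Rightarrow> nat \<Rightarrow> nat set set" where
  "product_part C xs j =
     (let k = card C; cs = blocks C in
      \<Union>i\<in>{..<k}. restr (xs ! ((i + j) mod k)) (cs ! i))"

definition rhs2 :: "nat \<Rightarrow> (nat set set \<Rightarrow> real) \<Rightarrow> (nat set set \<Rightarrow> real) \<Rightarrow> nat set set \<Rightarrow> real" where
  "rhs2 n \<rho> a D =
     (\<Sum>C\<in>parts n. \<Sum>xs\<in>tuples n (card C).
        \<rho> C / real (card C) * (\<Prod>j<card C. a (xs ! j)) *
        (\<Sum>j<card C. (if product_part C xs j = D then 1 else 0)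
                      - (if xs ! j = D then 1 else 0)))"

definition solves :: "nat \<Rightarrow> ((nat set set \<Rightarrow> real) \<Rightarrow> nat set set \<Rightarrow> real) \<Rightarrow> (real \<Rightarrow> nat set set \<Rightarrow> real) \<Rightarrow> bool" where
  "solves n F a \<longleftrightarrow>
     (\<forall>t\<ge>0. \<forall>A\<in>parts n. ((\<lambda>s. a s A) has_real_derivative F (a t) A) (at t within {0..}))"

end

theory Submission
  imports Defs
begin


lemma gronwall0:
  fixes u u' :: "real \<Rightarrow> real"
  assumes der: "\<And>t. t \<ge> 0 \<Longrightarrow> (u has_real_derivative u' t) (at t within {0..})"
    and u0: "u 0 = 0"
    and bd: "\<And>T. T \<ge> 0 \<Longrightarrow> \<exists>K\<ge>0. \<forall>t\<in>{0..T}. \<bar>u' t\<bar> \<le> K * \<bar>u t\<bar>"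
    and T: "T \<ge> 0"
  shows "u T = 0"
proof -
  obtain K where K: "K \<ge> 0" "\<And>t. t \<in> {0..T} \<Longrightarrow> \<bar>u' t\<bar> \<le> K * \<bar>u t\<bar>" using bd[OF T] by blast
  define w where "w s = (u s)^2 * exp (- 2 * K * s)" for s
  have cu: "continuous_on {0..} u" by (rule DERIV_continuous_on[OF der]) auto
  have cu2: "continuous_on {0..T} u" using continuous_on_subset[OF cu, of "{0..T}"] by auto
  have cw: "continuous_on {0..T} w" unfolding w_def
    by (intro continuous_intros cu2)
  have "w T \<le> w 0"
  proof (rule DERIV_nonpos_imp_decreasing_open[OF T _ cw])
    fix x assume x: "0 < x" "x < T"
    have d1: "(u has_real_derivative u' x) (at x)"
    proof -
      have "(u has_real_derivative u' x) (at x within {0<..})"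
        proof (rule has_field_derivative_subset[OF der[of x]])
        show "0 \<le> x" using x by simp
        show "{0<..} \<subseteq> {0::real..}" by auto
      qed
      moreover have "at x within {0<..} = at x" using x by (intro at_within_open) auto
      ultimately show ?thesis by simp
    qed
    have "(w has_real_derivative (2 * u x * u' x * exp (- 2 * K * x) + (u x)^2 * (exp (- 2 * K * x) * (- 2 * K)))) (at x)"
      unfolding w_def
      by (rule derivative_eq_intros d1 refl | simp)+
    moreover have "2 * u x * u' x * exp (- 2 * K * x) + (u x)^2 * (exp (- 2 * K * x) * (- 2 * K)) \<le> 0"
    proof -
      have "u x * u' x \<le> K * (u x)^2"
      proof -
        have "u x * u' x \<le> \<bar>u x\<bar> * \<bar>u' x\<bar>" by (metis abs_ge_self abs_mult)
        also have "\<dots> \<le> \<bar>u x\<bar> * (K * \<bar>u x\<bar>)" using K(2)[of x] x by (intro mult_left_mono) auto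
        also have "\<dots> = K * (u x)^2" by (simp add: power2_eq_square abs_mult_self_eq)
        finally show ?thesis .
      qed
      then have "2 * exp (- 2 * K * x) * (u x * u' x - K * (u x)^2) \<le> 0"
        by (intro mult_nonneg_nonpos) auto
      then show ?thesis by (simp add: algebra_simps)
    qed
    ultimately show "\<exists>y. (w has_real_derivative y) (at x) \<and> y \<le> 0" by blast
  qed
  then have "(u T)^2 * exp (- 2 * K * T) \<le> 0" using u0 by (simp add: w_def)
  moreover have "(u T)^2 * exp (- 2 * K * T) \<ge> 0" by simp
  ultimately have "(u T)^2 * exp (- 2 * K * T) = 0" by linarith
  then show ?thesis by simp
qed



lemma finite_parts: "finite (parts n)"
  unfolding parts_def ground_def by (rule finitely_many_partition_on) simp

lemma parts_finite_elem: "C \<in> parts n \<Longrightarrow> finite C"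
  unfolding parts_def ground_def by (auto intro: finite_elements)

lemma parts_block_finite: "C \<in> parts n \<Longrightarrow> Y \<in> C \<Longrightarrow> finite Y"
proof -
  assume C: "C \<in> parts n" and Y: "Y \<in> C"
  have "Y \<subseteq> {1..n}" using C Y unfolding parts_def ground_def partition_on_def by auto
  then show "finite Y" using finite_subset by blast
qed

lemma parts_block_ne: "C \<in> parts n \<Longrightarrow> Y \<in> C \<Longrightarrow> Y \<noteq> {}"
  unfolding parts_def partition_on_def by auto

lemma parts_disj: "C \<in> parts n \<Longrightarrow> Y \<in> C \<Longrightarrow> Z \<in> C \<Longrightarrow> Y \<noteq> Z \<Longrightarrow> Y \<inter> Z = {}"
  unfolding parts_def partition_on_def by (auto dest: disjointD)

lemma parts_card: "n \<ge> 1 \<Longrightarrow> C \<in> parts n \<Longrightarrow> card C \<ge> 1"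
proof -
  assume n: "n \<ge> 1" and C: "C \<in> parts n"
  have "C \<noteq> {}" using C n unfolding parts_def partition_on_def ground_def by auto
  then show ?thesis using parts_finite_elem[OF C] by (simp add: Suc_le_eq card_gt_0_iff)
qed

lemma one_part_parts: "n \<ge> 1 \<Longrightarrow> one_part n \<in> parts n"
  unfolding one_part_def parts_def ground_def by (intro CollectI partition_on_space) auto

lemma blocks_props:
  assumes C: "C \<in> parts n"
  shows "distinct (blocks C) \<and> set (blocks C) = C \<and> length (blocks C) = card C"
proof -
  define f where "f m = (THE X. X \<in> C \<and> Min X = m)" for m
  have fM: "f (Min X) = X" if X: "X \<in> C" for X
    unfolding f_def
  proof (rule the_equality)
    show "X \<in> C \<and> Min X = Min X" using X by simp
    fix Y assume Y: "Y \<in> C \<and> Min Y = Min X"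
    have "Min X \<in> X" using parts_block_finite[OF C X] parts_block_ne[OF C X] by simp
    moreover have "Min Y \<in> Y" using parts_block_finite[OF C, of Y] parts_block_ne[OF C, of Y] Y by (metis Min_in)
    ultimately show "Y = X" using parts_disj[OF C, of X Y] X Y by auto
  qed
  have injM: "inj_on Min C" by (metis fM inj_onI)
  have injf: "inj_on f (Min ` C)" by (auto intro!: inj_onI simp: fM)
  have fin: "finite (Min ` C)" using parts_finite_elem[OF C] by simp
  have bl: "blocks C = map f (sorted_list_of_set (Min ` C))" unfolding blocks_def f_def by simp
  have "distinct (blocks C)" unfolding bl using injf fin by (simp add: distinct_map)
  moreover have "set (blocks C) = C" unfolding bl using fin by (force simp: fM image_image)
  moreover have "length (blocks C) = card C" unfolding bl using fin injM by (simp add: card_image)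
  ultimately show ?thesis by blast
qed

lemma sum_tuples_prod:
  fixes f :: "nat \<Rightarrow> 'a \<Rightarrow> real"
  assumes "finite A"
  shows "(\<Sum>xs\<in>{xs. length xs = k \<and> set xs \<subseteq> A}. \<Prod>i<k. f i (xs!i)) = (\<Prod>i<k. \<Sum>x\<in>A. f i x)"
proof (induction k arbitrary: f)
  case 0
  have "{xs. length xs = 0 \<and> set xs \<subseteq> A} = {[]}" by auto
  then show ?case by simp
next
  case (Suc k)
  let ?T = "\<lambda>k. {xs. length xs = k \<and> set xs \<subseteq> A}"
  have eq: "?T (Suc k) = (\<lambda>(x,xs). x # xs) ` (A \<times> ?T k)"
  proof
    show "?T (Suc k) \<subseteq> (\<lambda>(x,xs). x # xs) ` (A \<times> ?T k)"
    proof
      fix ys assume "ys \<in> ?T (Suc k)"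
      then obtain x xs where "ys = x # xs" "x \<in> A" "xs \<in> ?T k" by (cases ys) auto
      then show "ys \<in> (\<lambda>(x,xs). x # xs) ` (A \<times> ?T k)" by force
    qed
  qed auto
  have inj: "inj_on (\<lambda>(x,xs). x # xs) (A \<times> ?T k)" by (auto intro!: inj_onI)
  have "(\<Sum>xs\<in>?T (Suc k). \<Prod>i<Suc k. f i (xs!i))
      = (\<Sum>p\<in>A \<times> ?T k. \<Prod>i<Suc k. f i (((\<lambda>(x,xs). x # xs) p)!i))"
    unfolding eq by (subst sum.reindex[OF inj]) simp
  also have "\<dots> = (\<Sum>p\<in>A \<times> ?T k. f 0 (fst p) * (\<Prod>i<k. f (Suc i) (snd p ! i)))"
    by (intro sum.cong refl) (auto simp del: prod.lessThan_Suc simp add: prod.lessThan_Suc_shift)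
  also have "\<dots> = (\<Sum>x\<in>A. \<Sum>xs\<in>?T k. f 0 x * (\<Prod>i<k. f (Suc i) (xs ! i)))"
    by (subst sum.cartesian_product) (simp add: case_prod_beta)
  also have "\<dots> = (\<Sum>x\<in>A. f 0 x) * (\<Sum>xs\<in>?T k. \<Prod>i<k. f (Suc i) (xs ! i))"
    by (simp add: sum_product)
  also have "\<dots> = (\<Sum>x\<in>A. f 0 x) * (\<Prod>i<k. \<Sum>x\<in>A. f (Suc i) x)"
    using Suc[of "\<lambda>i. f (Suc i)"] by simp
  also have "\<dots> = (\<Prod>i<Suc k. \<Sum>x\<in>A. f i x)" by (simp del: prod.lessThan_Suc add: prod.lessThan_Suc_shift)
  finally show ?case .
qed

lemma prod_if_one:
  fixes c m :: real
  assumes "j < k"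
  shows "(\<Prod>i<k. if i = j then c else m) = c * m ^ (k - 1)"
proof -
  have "(\<Prod>i<k. if i = j then c else m) = (if j = j then c else m) * (\<Prod>i\<in>{..<k} - {j}. if i = j then c else m)"
    using assms by (subst prod.remove[of _ j]) auto
  also have "(\<Prod>i\<in>{..<k} - {j}. if i = j then c else m) = (\<Prod>i\<in>{..<k} - {j}. m)"
    by (intro prod.cong) auto
  also have "\<dots> = m ^ (k - 1)" using assms by simp
  finally show ?thesis by simp
qed

lemma restr_restr_same: "restr (restr P Y) Y = restr P Y"
  unfolding restr_def by (auto simp: Int_assoc)

lemma restr_restr_disj: "Y' \<inter> Y = {} \<Longrightarrow> restr (restr P Y') Y = {}"
  unfolding restr_def by auto

lemma restr_UN: "restr (\<Union>i\<in>I. R i) Y = (\<Union>i\<in>I. restr (R i) Y)"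
  unfolding restr_def by auto

lemma Union_restr: "\<Union>(restr P Y) = \<Union>P \<inter> Y"
  unfolding restr_def by auto

lemma union_restr_iff:
  fixes Y :: "nat \<Rightarrow> nat set" and Xs :: "nat \<Rightarrow> nat set set"
  assumes disj: "\<And>i j. i < k \<Longrightarrow> j < k \<Longrightarrow> i \<noteq> j \<Longrightarrow> Y i \<inter> Y j = {}" and ne: "{} \<notin> D"
  shows "(\<Union>i<k. restr (Xs i) (Y i)) = D \<longleftrightarrow>
         (\<forall>Z\<in>D. \<exists>i<k. Z \<subseteq> Y i) \<and> (\<forall>i<k. restr (Xs i) (Y i) = restr D (Y i))"
proof
  assume U: "(\<Union>i<k. restr (Xs i) (Y i)) = D"
  have "\<forall>Z\<in>D. \<exists>i<k. Z \<subseteq> Y i" using U[symmetric] unfolding restr_def by auto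
  moreover have "restr (Xs i) (Y i) = restr D (Y i)" if i: "i < k" for i
  proof -
    have "restr D (Y i) = (\<Union>l<k. restr (restr (Xs l) (Y l)) (Y i))" unfolding U[symmetric] restr_UN ..
    also have "\<dots> = (\<Union>l\<in>{i}. restr (restr (Xs l) (Y l)) (Y i))"
      using i restr_restr_disj[OF disj] by (auto split: if_splits)
    also have "\<dots> = restr (Xs i) (Y i)" by (simp add: restr_restr_same)
    finally show ?thesis by simp
  qed
  ultimately show "(\<forall>Z\<in>D. \<exists>i<k. Z \<subseteq> Y i) \<and> (\<forall>i<k. restr (Xs i) (Y i) = restr D (Y i))" by blast
next
  assume H: "(\<forall>Z\<in>D. \<exists>i<k. Z \<subseteq> Y i) \<and> (\<forall>i<k. restr (Xs i) (Y i) = restr D (Y i))"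
  have "(\<Union>i<k. restr (Xs i) (Y i)) = (\<Union>i<k. restr D (Y i))" using H by simp
  also have "\<dots> = D"
  proof
    show "(\<Union>i<k. restr D (Y i)) \<subseteq> D"
    proof
      fix W assume "W \<in> (\<Union>i<k. restr D (Y i))"
      then obtain i Z where i: "i < k" and Z: "Z \<in> D" and W: "W = Z \<inter> Y i" "W \<noteq> {}"
        unfolding restr_def by auto
      obtain l where l: "l < k" "Z \<subseteq> Y l" using H Z by blast
      have "l = i" using disj[OF l(1) i] l W by blast
      then show "W \<in> D" using W Z l by (simp add: Int_absorb2)
    qed
  next
    show "D \<subseteq> (\<Union>i<k. restr D (Y i))"
    proof
      fix Z assume Z: "Z \<in> D"
      obtain l where l: "l < k" "Z \<subseteq> Y l" using H Z by blast
      have "Z \<noteq> {}" using ne Z by auto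
      then have "Z \<in> restr D (Y l)" unfolding restr_def using Z l by (auto simp: Int_absorb2 intro!: image_eqI[of _ _ Z])
      then show "Z \<in> (\<Union>i<k. restr D (Y i))" using l by blast
    qed
  qed
  finally show "(\<Union>i<k. restr (Xs i) (Y i)) = D" .
qed

lemma union_restr_parts:
  fixes Y :: "nat \<Rightarrow> nat set" and Xs :: "nat \<Rightarrow> nat set set"
  assumes disj: "\<And>i j. i < k \<Longrightarrow> j < k \<Longrightarrow> i \<noteq> j \<Longrightarrow> Y i \<inter> Y j = {}"
    and cov: "(\<Union>i<k. Y i) = ground n"
    and X: "\<And>i. i < k \<Longrightarrow> Xs i \<in> parts n"
  shows "(\<Union>i<k. restr (Xs i) (Y i)) \<in> parts n"
proof -
  have XU: "\<Union>(Xs i) = ground n" if "i < k" for i using X[OF that] unfolding parts_def partition_on_def by auto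
  have "\<Union>(\<Union>i<k. restr (Xs i) (Y i)) = (\<Union>i<k. \<Union>(Xs i) \<inter> Y i)" by (auto simp: Union_restr[symmetric])
  also have "\<dots> = (\<Union>i<k. Y i)" using XU cov by auto
  finally have U: "\<Union>(\<Union>i<k. restr (Xs i) (Y i)) = ground n" using cov by simp
  have E: "{} \<notin> (\<Union>i<k. restr (Xs i) (Y i))" unfolding restr_def by auto
  have D: "disjoint (\<Union>i<k. restr (Xs i) (Y i))"
  proof (rule disjointI)
    fix W1 W2 assume W1: "W1 \<in> (\<Union>i<k. restr (Xs i) (Y i))" and W2: "W2 \<in> (\<Union>i<k. restr (Xs i) (Y i))" and ne: "W1 \<noteq> W2"
    from W1 obtain i Z1 where i: "i < k" "Z1 \<in> Xs i" "W1 = Z1 \<inter> Y i" unfolding restr_def by auto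
    from W2 obtain l Z2 where l: "l < k" "Z2 \<in> Xs l" "W2 = Z2 \<inter> Y l" unfolding restr_def by auto
    show "W1 \<inter> W2 = {}"
    proof (cases "i = l")
      case True
      then have "Z1 \<noteq> Z2" using i l ne by auto
      then have "Z1 \<inter> Z2 = {}" using X[OF l(1)] i l True unfolding parts_def partition_on_def by (auto dest: disjointD)
      then show ?thesis using i l by auto
    next
      case False
      then show ?thesis using disj[OF i(1) l(1)] i l by auto
    qed
  qed
  show ?thesis unfolding parts_def partition_on_def using U E D by simp
qed

lemma prod_nth_list: "(\<Prod>i<length xs. f (xs ! i)) = prod_list (map f xs)" for f :: "'a \<Rightarrow> real"
  by (induction xs) (simp_all del: prod.lessThan_Suc add: prod.lessThan_Suc_shift)

lemma prod_list_rotate: "prod_list (map f (rotate j xs)) = prod_list (map f xs)" for f :: "'a \<Rightarrow> real"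
proof (induction j)
  case (Suc j)
  have "prod_list (map f (rotate1 ys)) = prod_list (map f ys)" for ys
    by (cases ys) (simp_all add: mult.commute)
  then show ?case using Suc by simp
qed simp

lemma prod_rotate:
  fixes f :: "'a \<Rightarrow> real"
  assumes "length xs = k"
  shows "(\<Prod>i<k. f (rotate j xs ! i)) = (\<Prod>i<k. f (xs ! i))"
  using prod_nth_list[of f "rotate j xs"] prod_nth_list[of f xs] prod_list_rotate[of f j xs] assms by simp

lemma blocks_facts:
  assumes C: "C \<in> parts n"
  shows "\<And>i j. i < card C \<Longrightarrow> j < card C \<Longrightarrow> i \<noteq> j \<Longrightarrow> blocks C ! i \<inter> blocks C ! j = {}"
    and "(\<Union>i<card C. blocks C ! i) = ground n"
    and "\<And>D. coarser D C \<longleftrightarrow> (\<forall>Z\<in>D. \<exists>i<card C. Z \<subseteq> blocks C ! i)"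
    and "\<And>g. (\<Prod>Y\<in>C. g Y) = (\<Prod>i<card C. g (blocks C ! i))"
proof -
  note bp = blocks_props[OF C]
  have s1: "set (blocks C) = (\<lambda>i. blocks C ! i) ` {..<length (blocks C)}" by (force simp: in_set_conv_nth)
  have setc: "C = (\<lambda>i. blocks C ! i) ` {..<card C}" using bp s1 by metis
  show "blocks C ! i \<inter> blocks C ! j = {}" if "i < card C" "j < card C" "i \<noteq> j" for i j
  proof (rule parts_disj[OF C])
    show "blocks C ! i \<in> C" "blocks C ! j \<in> C" using that setc by auto
    show "blocks C ! i \<noteq> blocks C ! j" using that bp by (simp add: nth_eq_iff_index_eq)
  qed
  have "ground n = \<Union>C" using C unfolding parts_def partition_on_def by auto
  then show "(\<Union>i<card C. blocks C ! i) = ground n" using setc by simp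
  show "coarser D C \<longleftrightarrow> (\<forall>Z\<in>D. \<exists>i<card C. Z \<subseteq> blocks C ! i)" for D
    unfolding coarser_def by (subst setc) blast
  have inj: "inj_on (\<lambda>i. blocks C ! i) {..<card C}" using bp by (intro inj_on_nth) auto
  show "(\<Prod>Y\<in>C. g Y) = (\<Prod>i<card C. g (blocks C ! i))" for g
    by (subst setc) (simp add: prod.reindex[OF inj])
qed

lemma pp_unfold: "product_part C xs j = (\<Union>i<card C. restr (xs ! ((i + j) mod card C)) (blocks C ! i))"
  unfolding product_part_def Let_def ..

lemma pp_rot:
  assumes "length xs = card C" "j < card C"
  shows "product_part C (rotate j xs) 0 = product_part C xs j"
  unfolding pp_unfold using assms by (intro SUP_cong refl) (simp add: nth_rotate add.commute)

lemma prod_indicator: "(\<Prod>i<(k::nat). if Q i then 1 else 0 :: real) = (if \<forall>i<k. Q i then 1 else 0)"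
  by (induction k) (auto simp: less_Suc_eq)

lemma loss_lemma:
  fixes a :: "nat set set \<Rightarrow> real"
  assumes D: "D \<in> parts n" and j: "j < k"
  shows "(\<Sum>xs\<in>tuples n k. (\<Prod>i<k. a (xs!i)) * (if xs ! j = D then 1 else 0))
         = a D * (\<Sum>X\<in>parts n. a X) ^ (k - 1)"
proof -
  have "(\<Sum>xs\<in>tuples n k. (\<Prod>i<k. a (xs!i)) * (if xs ! j = D then 1 else 0))
      = (\<Sum>xs\<in>tuples n k. \<Prod>i<k. a (xs!i) * (if i = j then (if xs ! i = D then 1 else 0) else 1))"
  proof (intro sum.cong refl)
    fix xs
    have "(\<Prod>i<k. a (xs!i) * (if i = j then (if xs ! i = D then 1 else 0) else 1))
        = (\<Prod>i<k. a (xs!i)) * (\<Prod>i<k. (if i = j then (if xs ! j = D then 1 else 0) else 1))"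
      by (subst prod.distrib[symmetric]) (intro prod.cong refl, auto)
    also have "(\<Prod>i<k. (if i = j then (if xs ! j = D then 1 else 0) else 1::real)) = (if xs ! j = D then 1 else 0)"
      using prod_if_one[OF j, of "if xs ! j = D then 1 else 0" 1] by simp
    finally show "(\<Prod>i<k. a (xs!i)) * (if xs ! j = D then 1 else 0)
        = (\<Prod>i<k. a (xs!i) * (if i = j then (if xs ! i = D then 1 else 0) else 1))" by simp
  qed
  also have "\<dots> = (\<Prod>i<k. \<Sum>X\<in>parts n. a X * (if i = j then (if X = D then 1 else 0) else 1))"
    unfolding tuples_def by (rule sum_tuples_prod[OF finite_parts])
  also have "\<dots> = (\<Prod>i<k. if i = j then a D else (\<Sum>X\<in>parts n. a X))"
  proof (intro prod.cong refl)
    fix i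
    show "(\<Sum>X\<in>parts n. a X * (if i = j then (if X = D then 1 else 0) else 1)) = (if i = j then a D else (\<Sum>X\<in>parts n. a X))"
    proof (cases "i = j")
      case True
      have "(\<Sum>X\<in>parts n. a X * (if X = D then 1 else 0)) = (\<Sum>X\<in>parts n. if X = D then a X else 0)"
        by (intro sum.cong) auto
      also have "\<dots> = a D" using D finite_parts by (simp add: sum.delta')
      finally show ?thesis using True by simp
    qed simp
  qed
  also have "\<dots> = a D * (\<Sum>X\<in>parts n. a X) ^ (k - 1)" by (rule prod_if_one[OF j])
  finally show ?thesis .
qed

lemma gain_rot:
  fixes a :: "nat set set \<Rightarrow> real"
  assumes j: "j < card C"
  shows "(\<Sum>xs\<in>tuples n (card C). (\<Prod>i<card C. a (xs!i)) * (if product_part C xs j = D then 1 else 0))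
       = (\<Sum>xs\<in>tuples n (card C). (\<Prod>i<card C. a (xs!i)) * (if product_part C xs 0 = D then 1 else 0))"
proof (rule sum.reindex_bij_witness[of _ "rotate (card C - j)" "rotate j"])
  fix xs assume xs: "xs \<in> tuples n (card C)"
  then have l: "length xs = card C" unfolding tuples_def by simp
  have "rotate (card C - j) (rotate j xs) = rotate (card C) xs" using j by (simp add: rotate_rotate)
  also have "\<dots> = xs" using l by simp
  finally show "rotate (card C - j) (rotate j xs) = xs" .
  show "rotate j xs \<in> tuples n (card C)" using xs unfolding tuples_def by simp
  have "rotate j (rotate (card C - j) xs) = rotate (card C) xs" using j by (simp add: rotate_rotate)
  also have "\<dots> = xs" using l by simp
  finally show "rotate j (rotate (card C - j) xs) = xs" .
  show "rotate (card C - j) xs \<in> tuples n (card C)" using xs unfolding tuples_def by simp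
  show "(\<Prod>i<card C. a (rotate j xs ! i)) * (if product_part C (rotate j xs) 0 = D then 1 else 0)
      = (\<Prod>i<card C. a (xs ! i)) * (if product_part C xs j = D then 1 else 0)"
    using prod_rotate[OF l, of a j] pp_rot[OF l j] by simp
qed

lemma gain0:
  fixes a :: "nat set set \<Rightarrow> real"
  assumes C: "C \<in> parts n" and D: "D \<in> parts n"
  shows "(\<Sum>xs\<in>tuples n (card C). (\<Prod>i<card C. a (xs!i)) * (if product_part C xs 0 = D then 1 else 0))
       = (if coarser D C then \<Prod>Y\<in>C. \<Sum>X\<in>{X\<in>parts n. restr X Y = restr D Y}. a X else 0)"
proof -
  let ?k = "card C" and ?cs = "blocks C"
  note bf = blocks_facts[OF C]
  have neD: "{} \<notin> D" using D unfolding parts_def partition_on_def by auto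
  have pp0: "product_part C xs 0 = (\<Union>i<?k. restr (xs ! i) (?cs ! i))" for xs
    unfolding pp_unfold by (intro SUP_cong refl) simp
  have iff: "product_part C xs 0 = D \<longleftrightarrow> coarser D C \<and> (\<forall>i<?k. restr (xs ! i) (?cs ! i) = restr D (?cs ! i))" for xs
    unfolding pp0 bf(3) by (rule union_restr_iff[OF bf(1) neD])
  show ?thesis
  proof (cases "coarser D C")
    case False
    then show ?thesis using iff by simp
  next
    case True
    have "(\<Sum>xs\<in>tuples n ?k. (\<Prod>i<?k. a (xs!i)) * (if product_part C xs 0 = D then 1 else 0))
        = (\<Sum>xs\<in>tuples n ?k. \<Prod>i<?k. a (xs!i) * (if restr (xs ! i) (?cs ! i) = restr D (?cs ! i) then 1 else 0))"
      using True by (intro sum.cong refl) (simp add: iff prod.distrib prod_indicator)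
    also have "\<dots> = (\<Prod>i<?k. \<Sum>X\<in>parts n. a X * (if restr X (?cs ! i) = restr D (?cs ! i) then 1 else 0))"
      unfolding tuples_def by (rule sum_tuples_prod[OF finite_parts])
    also have "\<dots> = (\<Prod>i<?k. \<Sum>X\<in>{X\<in>parts n. restr X (?cs ! i) = restr D (?cs ! i)}. a X)"
      by (intro prod.cong refl) (simp add: sum.inter_filter[OF finite_parts, symmetric] if_distrib cong: if_cong)
    also have "\<dots> = (\<Prod>Y\<in>C. \<Sum>X\<in>{X\<in>parts n. restr X Y = restr D Y}. a X)" by (rule bf(4)[symmetric])
    finally show ?thesis using True by simp
  qed
qed

lemma rhs2_formula:
  fixes a :: "nat set set \<Rightarrow> real"
  assumes n: "n \<ge> 1" and D: "D \<in> parts n"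
  shows "rhs2 n \<rho> a D = (\<Sum>C\<in>parts n. \<rho> C * ((if coarser D C then \<Prod>Y\<in>C. \<Sum>X\<in>{X\<in>parts n. restr X Y = restr D Y}. a X else 0)
            - a D * (\<Sum>X\<in>parts n. a X) ^ (card C - 1)))"
  unfolding rhs2_def
proof (intro sum.cong refl)
  fix C assume C: "C \<in> parts n"
  let ?k = "card C"
  let ?T = "tuples n ?k"
  let ?P = "\<lambda>xs. \<Prod>j<?k. a (xs ! j)"
  let ?G = "if coarser D C then \<Prod>Y\<in>C. \<Sum>X\<in>{X\<in>parts n. restr X Y = restr D Y}. a X else 0"
  let ?L = "a D * (\<Sum>X\<in>parts n. a X) ^ (?k - 1)"
  let ?c = "\<rho> C / real ?k"
  have k: "?k \<ge> 1" using parts_card[OF n C] .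
  have "(\<Sum>xs\<in>?T. ?c * ?P xs * (\<Sum>j<?k. (if product_part C xs j = D then 1 else 0) - (if xs ! j = D then 1 else 0)))
      = ?c * (\<Sum>xs\<in>?T. \<Sum>j<?k. ?P xs * (if product_part C xs j = D then 1 else 0) - ?P xs * (if xs ! j = D then 1 else 0))"
    by (simp add: sum_distrib_left right_diff_distrib mult.assoc)
  also have "\<dots> = ?c * ((\<Sum>xs\<in>?T. \<Sum>j<?k. ?P xs * (if product_part C xs j = D then 1 else 0))
                       - (\<Sum>xs\<in>?T. \<Sum>j<?k. ?P xs * (if xs ! j = D then 1 else 0)))"
    by (simp only: sum_subtractf)
  also have "(\<Sum>xs\<in>?T. \<Sum>j<?k. ?P xs * (if product_part C xs j = D then 1 else 0)) = (\<Sum>j<?k. \<Sum>xs\<in>?T. ?P xs * (if product_part C xs j = D then 1 else 0))"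
    by (rule sum.swap)
  also have "(\<Sum>xs\<in>?T. \<Sum>j<?k. ?P xs * (if xs ! j = D then 1 else 0)) = (\<Sum>j<?k. \<Sum>xs\<in>?T. ?P xs * (if xs ! j = D then 1 else 0))"
    by (rule sum.swap)
  also have "(\<Sum>j<?k. \<Sum>xs\<in>?T. ?P xs * (if product_part C xs j = D then 1 else 0)) = (\<Sum>j<?k. ?G)"
    by (intro sum.cong refl) (simp add: gain_rot gain0[OF C D])
  also have "(\<Sum>j<?k. \<Sum>xs\<in>?T. ?P xs * (if xs ! j = D then 1 else 0)) = (\<Sum>j<?k. ?L)"
    by (intro sum.cong refl) (simp add: loss_lemma[OF D])
  also have "?c * ((\<Sum>j<?k. ?G) - (\<Sum>j<?k. ?L)) = \<rho> C * (?G - ?L)"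
    using k by (simp add: field_simps)
  finally show "(\<Sum>xs\<in>?T. ?c * ?P xs * (\<Sum>j<?k. (if product_part C xs j = D then 1 else 0) - (if xs ! j = D then 1 else 0)))
      = \<rho> C * (?G - ?L)" .
qed

lemma pp_parts:
  assumes n: "n \<ge> 1" and C: "C \<in> parts n" and xs: "xs \<in> tuples n (card C)"
  shows "product_part C xs j \<in> parts n"
  unfolding pp_unfold
proof (rule union_restr_parts[OF blocks_facts(1)[OF C] blocks_facts(2)[OF C]])
  fix i assume "i < card C"
  have "(i + j) mod card C < card C" using parts_card[OF n C] by simp
  then show "xs ! ((i + j) mod card C) \<in> parts n" using xs unfolding tuples_def by auto
qed auto

lemma delta_diff: "p \<in> parts n \<Longrightarrow> q \<in> parts n \<Longrightarrow> (\<Sum>D\<in>parts n. (if p = D then 1 else 0) - (if q = D then 1 else (0::real))) = 0"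
  using finite_parts by (simp add: sum_subtractf sum.delta)

lemma rhs2_conserve:
  fixes a :: "nat set set \<Rightarrow> real"
  assumes n: "n \<ge> 1"
  shows "(\<Sum>D\<in>parts n. rhs2 n \<rho> a D) = 0"
proof -
  have "(\<Sum>D\<in>parts n. rhs2 n \<rho> a D) = (\<Sum>C\<in>parts n. \<Sum>xs\<in>tuples n (card C). \<Sum>D\<in>parts n.
        \<rho> C / real (card C) * (\<Prod>j<card C. a (xs ! j)) *
        (\<Sum>j<card C. (if product_part C xs j = D then 1 else 0) - (if xs ! j = D then 1 else 0)))"
    unfolding rhs2_def by (subst sum.swap) (intro sum.cong refl, rule sum.swap)
  also have "\<dots> = 0"
  proof (rule sum.neutral, rule ballI, rule sum.neutral, rule ballI)
    fix C xs assume C: "C \<in> parts n" and xs: "xs \<in> tuples n (card C)"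
    have "(\<Sum>D\<in>parts n. (\<Sum>j<card C. (if product_part C xs j = D then 1 else 0) - (if xs ! j = D then 1 else 0)))
        = (\<Sum>j<card C. \<Sum>D\<in>parts n. (if product_part C xs j = D then 1 else 0) - (if xs ! j = D then 1 else (0::real)))"
      by (rule sum.swap)
    also have "\<dots> = 0"
      by (rule sum.neutral) (use pp_parts[OF n C xs] xs in \<open>auto simp: tuples_def intro!: delta_diff\<close>)
    finally show "(\<Sum>D\<in>parts n. \<rho> C / real (card C) * (\<Prod>j<card C. a (xs ! j)) *
        (\<Sum>j<card C. (if product_part C xs j = D then 1 else 0) - (if xs ! j = D then 1 else 0))) = 0"
      by (simp only: sum_distrib_left[symmetric] mult_zero_right)
  qed
  finally show ?thesis .
qed

lemma rhs1_rhs2: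
  fixes a :: "nat set set \<Rightarrow> real"
  assumes n: "n \<ge> 1" and D: "D \<in> parts n"
  shows "rhs1 n \<rho> a D = rhs2 n \<rho> a D + (\<Sum>C\<in>parts n. \<rho> C * a D * ((\<Sum>X\<in>parts n. a X) ^ (card C - 1) - 1))"
proof -
  let ?G = "\<lambda>C. if coarser D C then \<Prod>Y\<in>C. \<Sum>X\<in>{X\<in>parts n. restr X Y = restr D Y}. a X else 0"
  let ?m = "\<Sum>X\<in>parts n. a X"
  have "rhs1 n \<rho> a D = - (\<Sum>B\<in>parts n. \<rho> B) * a D + (\<Sum>C\<in>parts n. \<rho> C * ?G C)"
    unfolding rhs1_def sum.inter_filter[OF finite_parts] by (intro arg_cong2[where f="(+)"] refl sum.cong) auto
  also have "\<dots> = (\<Sum>C\<in>parts n. \<rho> C * (?G C - a D * ?m ^ (card C - 1)) + \<rho> C * a D * (?m ^ (card C - 1) - 1))"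
  proof -
    have "(\<Sum>C\<in>parts n. \<rho> C * (?G C - a D * ?m ^ (card C - 1)) + \<rho> C * a D * (?m ^ (card C - 1) - 1))
        = (\<Sum>C\<in>parts n. \<rho> C * ?G C - \<rho> C * a D)"
      by (intro sum.cong refl) (simp add: algebra_simps)
    also have "\<dots> = (\<Sum>C\<in>parts n. \<rho> C * ?G C) - (\<Sum>B\<in>parts n. \<rho> B) * a D"
      by (simp add: sum_subtractf sum_distrib_right)
    finally show ?thesis by simp
  qed
  also have "\<dots> = rhs2 n \<rho> a D + (\<Sum>C\<in>parts n. \<rho> C * a D * (?m ^ (card C - 1) - 1))"
    by (simp add: sum.distrib rhs2_formula[OF n D])
  finally show ?thesis .
qed



lemma mass_one:
  fixes m m' h :: "real \<Rightarrow> real"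
  assumes der: "\<And>t. t \<ge> 0 \<Longrightarrow> (m has_real_derivative m' t) (at t within {0..})"
    and m0: "m 0 = 1"
    and eq: "\<And>t. t \<ge> 0 \<Longrightarrow> m' t = (m t - 1) * h t"
    and ch: "continuous_on {0..} h"
    and t: "t \<ge> 0"
  shows "m t = 1"
proof -
  have "m t - 1 = 0"
  proof (rule gronwall0[where u = "\<lambda>s. m s - 1" and u' = m' and T = t])
    show "((\<lambda>s. m s - 1) has_real_derivative m' s) (at s within {0..})" if "s \<ge> 0" for s
      using der[OF that] by (auto intro!: derivative_eq_intros)
    show "m 0 - 1 = 0" using m0 by simp
    show "t \<ge> 0" by (rule t)
    fix T :: real assume T: "T \<ge> 0"
    have "continuous_on {0..T} h" using continuous_on_subset[OF ch, of "{0..T}"] by auto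
    then have "compact (h ` {0..T})" by (intro compact_continuous_image) auto
    then obtain B where B: "\<forall>x\<in>h ` {0..T}. \<bar>x\<bar> \<le> B" using compact_imp_bounded bounded_real by metis
    show "\<exists>K\<ge>0. \<forall>s\<in>{0..T}. \<bar>m' s\<bar> \<le> K * \<bar>m s - 1\<bar>"
    proof (intro exI[of _ "max B 0"] conjI ballI)
      fix s assume s: "s \<in> {0..T}"
      have "\<bar>m' s\<bar> = \<bar>h s\<bar> * \<bar>m s - 1\<bar>" using eq[of s] s by (simp add: abs_mult)
      also have "\<dots> \<le> max B 0 * \<bar>m s - 1\<bar>" proof (rule mult_right_mono)
        have "\<bar>h s\<bar> \<le> B" using B s by auto
        then show "\<bar>h s\<bar> \<le> max B 0" by linarith
      qed simp
      finally show "\<bar>m' s\<bar> \<le> max B 0 * \<bar>m s - 1\<bar>" .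
    qed simp
  qed
  then show ?thesis by simp
qed

theorem theorem6p1:
  fixes n :: nat and \<rho> :: "nat set set \<Rightarrow> real" and a :: "real \<Rightarrow> nat set set \<Rightarrow> real"
  assumes "n \<ge> 1"
    and "\<forall>B\<in>parts n. \<rho> B \<ge> 0"
    and "\<forall>A\<in>parts n. a 0 A = (if A = one_part n then 1 else 0)"
  shows "solves n (rhs1 n \<rho>) a \<longleftrightarrow> solves n (rhs2 n \<rho>) a"
proof -
  note n = assms(1)
  define m where "m t = (\<Sum>A\<in>parts n. a t A)" for t
  have m0: "m 0 = 1"
    using assms(3) one_part_parts[OF n] finite_parts unfolding m_def
    by (simp add: sum.delta' cong: sum.cong)
  have mder: "(m has_real_derivative (\<Sum>A\<in>parts n. F (a t) A)) (at t within {0..})"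
    if "solves n F a" "t \<ge> 0" for F t
    unfolding m_def using that unfolding solves_def by (intro DERIV_sum) auto
  have eqm1: "rhs1 n \<rho> (a t) D = rhs2 n \<rho> (a t) D" if "m t = 1" "D \<in> parts n" for t D
    using rhs1_rhs2[OF n that(2), of \<rho> "a t"] that(1) unfolding m_def by simp
  have mcont: "continuous_on {0..} m" if "solves n F a" for F
    by (rule DERIV_continuous_on[OF mder[OF that]]) auto
  show ?thesis
  proof
    assume S: "solves n (rhs1 n \<rho>) a"
    define h where "h t = (\<Sum>C\<in>parts n. \<rho> C * (\<Sum>i<card C - 1. m t ^ i) * m t)" for t
    have one: "m t = 1" if "t \<ge> 0" for t
    proof (rule mass_one[OF mder[OF S] m0 _ _ that])
      fix s :: real assume "s \<ge> 0"
      have "(\<Sum>A\<in>parts n. rhs1 n \<rho> (a s) A)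
          = (\<Sum>A\<in>parts n. rhs2 n \<rho> (a s) A) + (\<Sum>A\<in>parts n. \<Sum>C\<in>parts n. \<rho> C * a s A * (m s ^ (card C - 1) - 1))"
        unfolding m_def by (simp add: rhs1_rhs2[OF n] sum.distrib)
      also have "(\<Sum>A\<in>parts n. rhs2 n \<rho> (a s) A) = 0" by (rule rhs2_conserve[OF n])
      also have "(\<Sum>A\<in>parts n. \<Sum>C\<in>parts n. \<rho> C * a s A * (m s ^ (card C - 1) - 1))
          = (\<Sum>C\<in>parts n. \<Sum>A\<in>parts n. \<rho> C * (m s ^ (card C - 1) - 1) * a s A)"
        by (subst sum.swap) (simp add: mult_ac)
      also have "\<dots> = (\<Sum>C\<in>parts n. \<rho> C * (m s ^ (card C - 1) - 1) * m s)"
        unfolding m_def by (simp add: sum_distrib_left)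
      also have "\<dots> = (m s - 1) * h s"
        unfolding h_def sum_distrib_left by (intro sum.cong refl) (simp add: power_diff_1_eq mult_ac sum_distrib_left)
      finally show "(\<Sum>A\<in>parts n. rhs1 n \<rho> (a s) A) = (m s - 1) * h s" by simp
    next
      show "continuous_on {0..} h" unfolding h_def using mcont[OF S] by (intro continuous_intros)
    qed
    show "solves n (rhs2 n \<rho>) a"
      using S eqm1[OF one] unfolding solves_def by simp
  next
    assume S: "solves n (rhs2 n \<rho>) a"
    have one: "m t = 1" if "t \<ge> 0" for t
    proof (rule mass_one[OF mder[OF S] m0 _ _ that, where h = "\<lambda>_. 0"])
      fix s :: real
      show "(\<Sum>A\<in>parts n. rhs2 n \<rho> (a s) A) = (m s - 1) * 0" by (simp add: rhs2_conserve[OF n])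
    qed (auto intro: continuous_on_const)
    show "solves n (rhs1 n \<rho>) a"
      using S eqm1[OF one] unfolding solves_def by simp
  qed
qed

end
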